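(* Let $w=w_1\cdots w_N$ be a 132-avoiding sorting network of $\mathfrak S_n$ and $k\in[N-1]$, and let $u=(Q^{\to}_w)^{-1}(k)$ be the cell of $Q^\to_w$ containing $k$. Then $(w_k,w_{k+1})=(j,j+1)$ for some $j$ if and only if $(Q^\to_w,u)$ is a horizontal adjacency; and $(w_k,w_{k+1})=(j+1,j)$ for some $j$ if and only if $(Q^\to_w,u)$ is a vertical adjacency.
   Context: $N=\binom n2$; sorting networks, intermediate permutations and 132-avoidance as usual ($\sigma_k$ is $\sigma_{k-1}$ with entries in positions $w_k,w_k+1$ swapped; 132-avoiding means all $\sigma_k$ avoid 132). For a 132-avoiding sorting network $w$, $Q_w$ is the filling in which, for each $j\in[n-1]$, column $j$ contains from top to bottom the indices $m$ with $w_m=j$ in increasing order; it is a standard Young tableau of staircase shape $(n-1,\dots,1)$. $Q^\to_w$ is obtained by shifting row $i$ of $Q_w$ to the right by $i-1$ (cell $(i,j)\mapsto(i,i+j-1)$); it is a shifted standard Young tableau of shape $\{(i,j):1\le i\le j\le n-1\}$. For a (shifted) standard tableau $T$ with cell set $D$ and $u=(i,j)\in D$: $(T,u)$ is a horizontal adjacency if $(i,j+1)\in D$ and $T(i,j+1)=T(u)+1$; a vertical adjacency if $(i+1,j)\in D$ and $T(i+1,j)=T(u)+1$. *)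

theory Defs
  imports Main
begin

text \<open>Permutations of [n] are lists of length n (one-line notation, values 1..n).
  Words and positions are 1-indexed: letter w_m is \<open>letter w m = w ! (m-1)\<close>.\<close>

definition letter :: "nat list \<Rightarrow> nat \<Rightarrow> nat" where
  "letter w m = w ! (m - 1)"

definition swap_adj :: "nat list \<Rightarrow> nat \<Rightarrow> nat list" where
  "swap_adj s p = s[p - 1 := s ! p, p := s ! (p - 1)]"

text \<open>Intermediate permutation sigma_k: sigma_0 is the identity, sigma_k is sigma_(k-1)
  with the entries in positions w_k, w_k+1 swapped.\<close>
definition interm :: "nat \<Rightarrow> nat list \<Rightarrow> nat \<Rightarrow> nat list" where
  "interm n w k = foldl swap_adj [1..<n+1] (take k w)"

definition sorting_network :: "nat \<Rightarrow> nat list \<Rightarrow> bool" where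
  "sorting_network n w \<longleftrightarrow> length w = n choose 2 \<and> (\<forall>x\<in>set w. 1 \<le> x \<and> x \<le> n - 1)
     \<and> interm n w (length w) = rev [1..<n+1]"

definition contains132 :: "nat list \<Rightarrow> bool" where
  "contains132 s \<longleftrightarrow> (\<exists>a b c. a < b \<and> b < c \<and> c < length s \<and> s ! a < s ! c \<and> s ! c < s ! b)"

definition avoiding132 :: "nat \<Rightarrow> nat list \<Rightarrow> bool" where
  "avoiding132 n w \<longleftrightarrow> sorting_network n w \<and> (\<forall>k \<le> length w. \<not> contains132 (interm n w k))"

text \<open>Q_w: column j contains, top to bottom, the indices m with w_m = j in increasing order.\<close>
definition Qtab :: "nat list \<Rightarrow> nat \<times> nat \<Rightarrow> nat" where
  "Qtab w = (\<lambda>(i, j). sorted_list_of_set {m. 1 \<le> m \<and> m \<le> length w \<and> letter w m = j} ! (i - 1))"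

definition Qshift :: "nat list \<Rightarrow> nat \<times> nat \<Rightarrow> nat" where
  "Qshift w = (\<lambda>(i, j). Qtab w (i, j + 1 - i))"

definition shifted_staircase :: "nat \<Rightarrow> (nat \<times> nat) set" where
  "shifted_staircase n = {(i, j). 1 \<le> i \<and> i \<le> j \<and> j \<le> n - 1}"

definition horiz_adj :: "(nat \<times> nat \<Rightarrow> nat) \<Rightarrow> (nat \<times> nat) set \<Rightarrow> nat \<times> nat \<Rightarrow> bool" where
  "horiz_adj T D u \<longleftrightarrow> (fst u, snd u + 1) \<in> D \<and> T (fst u, snd u + 1) = T u + 1"

definition vert_adj :: "(nat \<times> nat \<Rightarrow> nat) \<Rightarrow> (nat \<times> nat) set \<Rightarrow> nat \<times> nat \<Rightarrow> bool" where
  "vert_adj T D u \<longleftrightarrow> (fst u + 1, snd u) \<in> D \<and> T (fst u + 1, snd u) = T u + 1"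

end

theory Submission
  imports Defs
begin


definition bef :: "nat list \<Rightarrow> nat \<Rightarrow> nat \<Rightarrow> bool" where
  "bef s c d \<longleftrightarrow> (\<exists>i j. i < j \<and> j < length s \<and> s!i = c \<and> s!j = d)"

definition Inv :: "nat list \<Rightarrow> (nat \<times> nat) set" where
  "Inv s = {(a,b). a < b \<and> bef s b a}"

definition Pairs :: "nat \<Rightarrow> (nat \<times> nat) set" where
  "Pairs n = {(a,b). 1 \<le> a \<and> a < b \<and> b \<le> n}"

lemma bef_asym: assumes "distinct s" "bef s c d" shows "\<not> bef s d c"
proof
  assume "bef s d c"
  then obtain i j where ij: "i < j" "j < length s" "s!i = d" "s!j = c" unfolding bef_def by blast
  from assms(2) obtain i' j' where ij': "i' < j'" "j' < length s" "s!i' = c" "s!j' = d" unfolding bef_def by blast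
  have "i = j'" using ij ij' assms(1) by (metis nth_eq_iff_index_eq order.strict_trans)
  moreover have "j = i'" using ij ij' assms(1) by (metis nth_eq_iff_index_eq order.strict_trans)
  ultimately show False using ij ij' by simp
qed

lemma bef_set: "bef s c d \<Longrightarrow> c \<in> set s \<and> d \<in> set s"
  unfolding bef_def by auto

lemma bef_total: assumes "distinct s" "c \<in> set s" "d \<in> set s" "c \<noteq> d"
  shows "bef s c d \<or> bef s d c"
proof -
  obtain i where i: "i < length s" "s!i = c" using assms(2) by (auto simp: in_set_conv_nth)
  obtain j where j: "j < length s" "s!j = d" using assms(3) by (auto simp: in_set_conv_nth)
  have "i \<noteq> j" using i j assms(4) by auto
  then show ?thesis unfolding bef_def using i j by (metis linorder_neqE_nat)
qed

lemma Inv_finite: "finite (Inv s)"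
proof -
  have "Inv s \<subseteq> set s \<times> set s" unfolding Inv_def using bef_set by auto
  then show ?thesis by (rule finite_subset) auto
qed

lemma bef_swap:
  assumes "distinct s" "Suc q < length s"
  shows "bef (s[q := s!Suc q, Suc q := s!q]) c d \<longleftrightarrow>
     (bef s c d \<and> \<not>(c = s!q \<and> d = s!Suc q)) \<or> (c = s!Suc q \<and> d = s!q)"
proof -
  define f where "f i = (if i = q then Suc q else if i = Suc q then q else i)" for i
  define s' where "s' = s[q := s!Suc q, Suc q := s!q]"
  have len: "length s' = length s" by (simp add: s'_def)
  have nth': "s'!i = s!(f i)" if "i < length s" for i
    using that assms by (auto simp: s'_def f_def nth_list_update)
  have ff: "f (f i) = i" for i by (auto simp: f_def)
  have flt: "f i < length s" if "i < length s" for i using that assms by (auto simp: f_def)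
  have ford: "f i < f j" if "i < j" "\<not>(i = q \<and> j = Suc q)" for i j
    using that by (auto simp: f_def)
  have inj: "s!i = s!j \<Longrightarrow> i < length s \<Longrightarrow> j < length s \<Longrightarrow> i = j" for i j
    using assms(1) nth_eq_iff_index_eq by blast
  show ?thesis unfolding s'_def[symmetric]
  proof
    assume "bef s' c d"
    then obtain i j where ij: "i < j" "j < length s" "s'!i = c" "s'!j = d" unfolding bef_def len by blast
    show "(bef s c d \<and> \<not>(c = s!q \<and> d = s!Suc q)) \<or> (c = s!Suc q \<and> d = s!q)"
    proof (cases "i = q \<and> j = Suc q")
      case True then show ?thesis using ij nth' by (auto simp: f_def)
    next
      case False
      have c: "s!(f i) = c" and d: "s!(f j) = d" using ij nth' by auto
      have "bef s c d" unfolding bef_def using ford[OF ij(1) False] flt ij c d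
        by (metis order.strict_trans)
      moreover have "\<not>(c = s!q \<and> d = s!Suc q)"
      proof
        assume h: "c = s!q \<and> d = s!Suc q"
        have "f i = q" using inj[of "f i" q] c h flt ij assms(2) by auto
        moreover have "f j = Suc q" using inj[of "f j" "Suc q"] d h flt ij assms(2) by auto
        ultimately have "i = Suc q" "j = q" using ff[of i] ff[of j] by (simp_all add: f_def)
        then show False using ij by simp
      qed
      ultimately show ?thesis by blast
    qed
  next
    assume h: "(bef s c d \<and> \<not>(c = s!q \<and> d = s!Suc q)) \<or> (c = s!Suc q \<and> d = s!q)"
    show "bef s' c d"
    proof (cases "c = s!Suc q \<and> d = s!q")
      case True
      then show ?thesis unfolding bef_def len using nth'[of q] nth'[of "Suc q"] assms(2)
        by (intro exI[of _ q] exI[of _ "Suc q"]) (auto simp: f_def)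
    next
      case False
      with h obtain i j where ij: "i < j" "j < length s" "s!i = c" "s!j = d"
        and nq: "\<not>(c = s!q \<and> d = s!Suc q)" unfolding bef_def by blast
      have "\<not>(i = q \<and> j = Suc q)" using ij nq by auto
      then have "f i < f j" using ij by (intro ford) auto
      moreover have "s'!(f i) = c" "s'!(f j) = d" using nth' flt ij ff
        by (metis order.strict_trans)+
      moreover have "f j < length s" using flt ij by simp
      ultimately show ?thesis unfolding bef_def len
        by (intro exI[of _ "f i"] exI[of _ "f j"]) simp
    qed
  qed
qed

lemma aux_up: "(x::nat) < y \<Longrightarrow> (a < b \<and> ((B \<and> \<not>(b = x \<and> a = y)) \<or> (b = y \<and> a = x))) \<longleftrightarrow> ((a,b) = (x,y) \<or> (a < b \<and> B))"
  by auto

lemma aux_down: "(y::nat) < x \<Longrightarrow> (a < b \<and> ((B \<and> \<not>(b = x \<and> a = y)) \<or> (b = y \<and> a = x))) \<longleftrightarrow> ((a < b \<and> B) \<and> (a,b) \<noteq> (y,x))"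
  by auto

lemma Inv_swap_up:
  assumes "distinct s" "Suc q < length s" "s!q < s!Suc q"
  shows "Inv (s[q := s!Suc q, Suc q := s!q]) = insert (s!q, s!Suc q) (Inv s)"
    and "(s!q, s!Suc q) \<notin> Inv s"
proof -
  have "(a,b) \<in> Inv (s[q := s!Suc q, Suc q := s!q]) \<longleftrightarrow> (a,b) \<in> insert (s!q, s!Suc q) (Inv s)" for a b
  proof -
    have "(a,b) \<in> Inv (s[q := s!Suc q, Suc q := s!q]) \<longleftrightarrow> a < b \<and> bef (s[q := s!Suc q, Suc q := s!q]) b a"
      unfolding Inv_def by simp
    also have "\<dots> \<longleftrightarrow> a < b \<and> ((bef s b a \<and> \<not>(b = s!q \<and> a = s!Suc q)) \<or> (b = s!Suc q \<and> a = s!q))"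
      using bef_swap[OF assms(1,2), of b a] by simp
    also have "\<dots> \<longleftrightarrow> (a,b) = (s!q, s!Suc q) \<or> (a < b \<and> bef s b a)"
      using aux_up[OF assms(3), of a b "bef s b a"] by simp
    also have "\<dots> \<longleftrightarrow> (a,b) \<in> insert (s!q, s!Suc q) (Inv s)"
      unfolding Inv_def by simp
    finally show ?thesis .
  qed
  then show "Inv (s[q := s!Suc q, Suc q := s!q]) = insert (s!q, s!Suc q) (Inv s)"
    by (intro set_eqI, case_tac x) simp
  have "bef s (s!q) (s!Suc q)" unfolding bef_def using assms(2) by auto
  then show "(s!q, s!Suc q) \<notin> Inv s" unfolding Inv_def using bef_asym[OF assms(1)] by auto
qed

lemma Inv_swap_down:
  assumes "distinct s" "Suc q < length s" "s!Suc q < s!q"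
  shows "Inv (s[q := s!Suc q, Suc q := s!q]) = Inv s - {(s!Suc q, s!q)}"
    and "(s!Suc q, s!q) \<in> Inv s"
proof -
  have "(a,b) \<in> Inv (s[q := s!Suc q, Suc q := s!q]) \<longleftrightarrow> (a,b) \<in> Inv s - {(s!Suc q, s!q)}" for a b
  proof -
    have "(a,b) \<in> Inv (s[q := s!Suc q, Suc q := s!q]) \<longleftrightarrow> a < b \<and> bef (s[q := s!Suc q, Suc q := s!q]) b a"
      unfolding Inv_def by simp
    also have "\<dots> \<longleftrightarrow> a < b \<and> ((bef s b a \<and> \<not>(b = s!q \<and> a = s!Suc q)) \<or> (b = s!Suc q \<and> a = s!q))"
      using bef_swap[OF assms(1,2), of b a] by simp
    also have "\<dots> \<longleftrightarrow> (a < b \<and> bef s b a) \<and> (a,b) \<noteq> (s!Suc q, s!q)"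
      using aux_down[OF assms(3), of a b "bef s b a"] by simp
    also have "\<dots> \<longleftrightarrow> (a,b) \<in> Inv s - {(s!Suc q, s!q)}"
      unfolding Inv_def by simp
    finally show ?thesis .
  qed
  then show "Inv (s[q := s!Suc q, Suc q := s!q]) = Inv s - {(s!Suc q, s!q)}"
    by (intro set_eqI, case_tac x) simp
  have "bef s (s!q) (s!Suc q)" unfolding bef_def using assms(2) by auto
  then show "(s!Suc q, s!q) \<in> Inv s" unfolding Inv_def using assms(3) by auto
qed

lemma card_Pairs: "card (Pairs n) = n choose 2"
proof (induction n)
  case 0
  have "Pairs 0 = {}" unfolding Pairs_def by auto
  then show ?case by simp
next
  case (Suc n)
  have eq: "Pairs (Suc n) = Pairs n \<union> (\<lambda>a. (a, Suc n)) ` {1..n}"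
    unfolding Pairs_def by auto
  have fin: "finite (Pairs n)"
    by (rule finite_subset[of _ "{0..n} \<times> {0..n}"]) (auto simp: Pairs_def)
  have disj: "Pairs n \<inter> (\<lambda>a. (a, Suc n)) ` {1..n} = {}" unfolding Pairs_def by auto
  have "card ((\<lambda>a. (a, Suc n)) ` {1..n}) = n"
    by (subst card_image) (auto simp: inj_on_def)
  then have "card (Pairs (Suc n)) = (n choose 2) + n"
    unfolding eq using Suc fin disj by (subst card_Un_disjoint) auto
  also have "\<dots> = Suc n choose 2"
    by (simp add: numeral_2_eq_2)
  finally show ?case .
qed

lemma rev_upt_nth: "i < n \<Longrightarrow> rev [1..<Suc n] ! i = n - i"
  by (simp add: rev_nth nth_upt del: upt_Suc)

lemma Inv_rev0:
  assumes len: "length r = n" and nth: "\<And>i. i < n \<Longrightarrow> r ! i = n - i"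
  shows "Inv r = Pairs n"
proof
  have sr: "set r \<subseteq> {1..n}"
  proof
    fix x assume "x \<in> set r"
    then obtain i where "i < n" "r!i = x" using len by (auto simp: in_set_conv_nth)
    then show "x \<in> {1..n}" using nth[of i] by auto
  qed
  show "Inv r \<subseteq> Pairs n"
  proof
    fix p assume "p \<in> Inv r"
    then obtain a b where p: "p = (a,b)" "a < b" "bef r b a" unfolding Inv_def by auto
    then have "a \<in> set r" "b \<in> set r" using bef_set by auto
    then show "p \<in> Pairs n" using sr p unfolding Pairs_def by auto
  qed
  show "Pairs n \<subseteq> Inv r"
  proof
    fix p assume "p \<in> Pairs n"
    then obtain a b where p: "p = (a,b)" "1 \<le> a" "a < b" "b \<le> n" unfolding Pairs_def by auto
    have e1: "r ! (n-b) = b" using nth[of "n-b"] p by simp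
    have e2: "r ! (n-a) = a" using nth[of "n-a"] p by simp
    have "n - b < n - a" "n - a < length r" using p len by auto
    then have "bef r b a" unfolding bef_def using e1 e2 by blast
    then show "p \<in> Inv r" unfolding Inv_def using p by auto
  qed
qed

lemma Inv_rev: "Inv (rev [1..<n+1]) = Pairs n"
proof (rule Inv_rev0)
  show "length (rev [1..<n+1]) = n" by (simp del: upt_Suc)
  show "rev [1..<n+1] ! i = n - i" if "i < n" for i
    using rev_upt_nth[OF that] by (simp del: upt_Suc)
qed

lemma Inv_id: "Inv [1..<n+1] = {}"
proof -
  have nth: "[1..<n+1] ! i = Suc i" if "i < n" for i using that by (simp del: upt_Suc)
  have len: "length [1..<n+1] = n" by (simp del: upt_Suc)
  have "\<not> bef [1..<n+1] b a" if "a < b" for a b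
  proof
    assume "bef [1..<n+1] b a"
    then obtain i j where "i < j" "j < n" "[1..<n+1]!i = b" "[1..<n+1]!j = a"
      unfolding bef_def len by blast
    then show False using nth[of i] nth[of j] that by simp
  qed
  then show ?thesis unfolding Inv_def by auto
qed



locale net =
  fixes n :: nat and w :: "nat list"
  assumes av: "avoiding132 n w"
begin

abbreviation NN where "NN \<equiv> length w"

definition sg :: "nat \<Rightarrow> nat list" where "sg t = interm n w t"
definition qq :: "nat \<Rightarrow> nat" where "qq t = w!t - 1"
definition xx :: "nat \<Rightarrow> nat" where "xx t = sg t ! qq t"
definition yy :: "nat \<Rightarrow> nat" where "yy t = sg t ! Suc (qq t)"
definition pr :: "nat \<Rightarrow> nat \<times> nat" where "pr t = (xx t, yy t)"

lemma sn: "sorting_network n w" using av unfolding avoiding132_def by simp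
lemma N_eq: "NN = n choose 2" using sn unfolding sorting_network_def by simp
lemma wrange: "t < NN \<Longrightarrow> 1 \<le> w!t \<and> w!t \<le> n - 1"
  using sn nth_mem unfolding sorting_network_def by blast
lemma Suc_qq: "t < NN \<Longrightarrow> Suc (qq t) = w!t" using wrange[of t] by (simp add: qq_def)
lemma qq_lt: "t < NN \<Longrightarrow> Suc (qq t) < n" using wrange[of t] unfolding qq_def by arith
lemma sg_final: "sg NN = rev [1..<n+1]" using sn unfolding sorting_network_def sg_def by blast
lemma avoid: "t \<le> NN \<Longrightarrow> \<not> contains132 (sg t)" using av unfolding avoiding132_def sg_def by simp
lemma sg0: "sg 0 = [1..<n+1]" by (simp add: sg_def interm_def)
lemma sg_Suc: "t < NN \<Longrightarrow> sg (Suc t) = (sg t)[qq t := sg t ! Suc (qq t), Suc (qq t) := sg t ! qq t]"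
proof -
  assume t: "t < NN"
  have "sg (Suc t) = swap_adj (sg t) (w!t)"
    using t by (simp add: sg_def interm_def take_Suc_conv_app_nth)
  then show ?thesis using Suc_qq[OF t] unfolding swap_adj_def
    by (metis diff_Suc_1)
qed

lemma sg_perm: "t \<le> NN \<Longrightarrow> length (sg t) = n \<and> distinct (sg t) \<and> set (sg t) = {1..n}"
proof (induction t)
  case 0
  show ?case unfolding sg0 by auto
next
  case (Suc t)
  then have t: "t < NN" by simp
  with Suc have IH: "length (sg t) = n" "distinct (sg t)" "set (sg t) = {1..n}" by auto
  have l: "Suc (qq t) < length (sg t)" using qq_lt[OF t] IH by simp
  show ?case unfolding sg_Suc[OF t] using IH l
    by (simp add: distinct_swap set_swap)
qed

lemma sg_len: "t \<le> NN \<Longrightarrow> length (sg t) = n" using sg_perm by blast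
lemma sg_dist: "t \<le> NN \<Longrightarrow> distinct (sg t)" using sg_perm by blast
lemma sg_set: "t \<le> NN \<Longrightarrow> set (sg t) = {1..n}" using sg_perm by blast

lemma xy_neq: "t < NN \<Longrightarrow> xx t \<noteq> yy t"
proof -
  assume t: "t < NN"
  have "Suc (qq t) < length (sg t)" using qq_lt[OF t] sg_len[of t] t by simp
  then show ?thesis unfolding xx_def yy_def using sg_dist[of t] t
    by (simp add: nth_eq_iff_index_eq)
qed

definition ff :: "nat \<Rightarrow> nat" where "ff t = card (Inv (sg t))"

lemma step_up: "t < NN \<Longrightarrow> xx t < yy t \<Longrightarrow>
    Inv (sg (Suc t)) = insert (pr t) (Inv (sg t)) \<and> pr t \<notin> Inv (sg t)"
proof -
  assume t: "t < NN" and a: "xx t < yy t"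
  have l: "Suc (qq t) < length (sg t)" using qq_lt[OF t] sg_len[of t] t by simp
  show ?thesis unfolding sg_Suc[OF t] pr_def xx_def yy_def
    using Inv_swap_up[OF sg_dist l] a t unfolding xx_def yy_def by simp
qed

lemma step_down: "t < NN \<Longrightarrow> yy t < xx t \<Longrightarrow>
    Inv (sg (Suc t)) = Inv (sg t) - {(yy t, xx t)} \<and> (yy t, xx t) \<in> Inv (sg t)"
proof -
  assume t: "t < NN" and a: "yy t < xx t"
  have l: "Suc (qq t) < length (sg t)" using qq_lt[OF t] sg_len[of t] t by simp
  show ?thesis unfolding sg_Suc[OF t] xx_def yy_def
    using Inv_swap_down[OF sg_dist l] a t unfolding xx_def yy_def by simp
qed

lemma ff_up: "t < NN \<Longrightarrow> xx t < yy t \<Longrightarrow> ff (Suc t) = Suc (ff t)"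
  unfolding ff_def using step_up[of t] Inv_finite by (simp add: card_insert_disjoint)

lemma ff_down: "t < NN \<Longrightarrow> yy t < xx t \<Longrightarrow> Suc (ff (Suc t)) = ff t"
proof -
  assume t: "t < NN" and a: "yy t < xx t"
  have "card (Inv (sg t) - {(yy t, xx t)}) = card (Inv (sg t)) - 1"
    using step_down[OF t a] Inv_finite by (simp add: card_Diff_singleton)
  moreover have "card (Inv (sg t)) > 0" using step_down[OF t a] Inv_finite card_gt_0_iff by blast
  ultimately show ?thesis unfolding ff_def using step_down[OF t a] by simp
qed

lemma ff_le: "t \<le> NN \<Longrightarrow> ff t \<le> t"
proof (induction t)
  case 0 show ?case unfolding ff_def sg0 Inv_id by simp
next
  case (Suc t)
  then have t: "t < NN" by simp
  show ?case
  proof (cases "xx t < yy t")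
    case True then show ?thesis using ff_up[OF t] Suc by simp
  next
    case False then have "yy t < xx t" using xy_neq[OF t] by simp
    then show ?thesis using ff_down[OF t] Suc by simp
  qed
qed

lemma ff_N: "ff NN = NN"
proof -
  have "ff NN = card (Pairs n)" unfolding ff_def sg_final Inv_rev ..
  then show ?thesis using card_Pairs N_eq by simp
qed

lemma ff_gap: "t + d = NN \<Longrightarrow> ff NN \<le> ff t + d"
proof (induction d arbitrary: t)
  case 0 then show ?case by simp
next
  case (Suc d)
  then have t: "t < NN" and IH: "ff NN \<le> ff (Suc t) + d" by auto
  have "ff (Suc t) \<le> Suc (ff t)"
  proof (cases "xx t < yy t")
    case True then show ?thesis using ff_up[OF t] by simp
  next
    case False then have "yy t < xx t" using xy_neq[OF t] by simp
    then show ?thesis using ff_down[OF t] by simp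
  qed
  then show ?case using IH by simp
qed

lemma ascent: "t < NN \<Longrightarrow> xx t < yy t"
proof (rule ccontr)
  assume t: "t < NN" and "\<not> xx t < yy t"
  then have d: "yy t < xx t" using xy_neq[OF t] by simp
  have "Suc (ff (Suc t)) = ff t" using ff_down[OF t d] .
  moreover have "ff t \<le> t" using ff_le t by simp
  moreover have "ff NN \<le> ff (Suc t) + (NN - Suc t)" using ff_gap[of "Suc t" "NN - Suc t"] t by simp
  ultimately show False using ff_N t by simp
qed

lemma Inv_step: "t < NN \<Longrightarrow> Inv (sg (Suc t)) = insert (pr t) (Inv (sg t)) \<and> pr t \<notin> Inv (sg t)"
  using step_up ascent by blast

lemma Inv_img: "t \<le> NN \<Longrightarrow> Inv (sg t) = pr ` {..<t}"
proof (induction t)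
  case 0 show ?case unfolding sg0 Inv_id by simp
next
  case (Suc t)
  then have t: "t < NN" by simp
  show ?case using Inv_step[OF t] Suc t by (simp add: lessThan_Suc)
qed

lemma Inv_mono: "t1 \<le> t2 \<Longrightarrow> t2 \<le> NN \<Longrightarrow> Inv (sg t1) \<subseteq> Inv (sg t2)"
  using Inv_img[of t1] Inv_img[of t2] by auto

lemma pr_inj: "inj_on pr {..<NN}"
proof (rule inj_onI)
  have *: "pr t1 \<noteq> pr t2" if "t1 < t2" "t2 < NN" for t1 t2
  proof -
    have "pr t1 \<in> Inv (sg t2)" using Inv_img[of t2] that by auto
    then show ?thesis using Inv_step[of t2] that by auto
  qed
  fix t1 t2 assume "t1 \<in> {..<NN}" "t2 \<in> {..<NN}" "pr t1 = pr t2"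
  then show "t1 = t2" using *[of t1 t2] *[of t2 t1] by (metis lessThan_iff linorder_neqE_nat)
qed

lemma pr_Pairs: "pr ` {..<NN} = Pairs n"
  using Inv_img[of NN] sg_final Inv_rev by simp

lemma pr_range: "t < NN \<Longrightarrow> 1 \<le> xx t \<and> xx t < yy t \<and> yy t \<le> n"
proof -
  assume "t < NN"
  then have "pr t \<in> Pairs n" using pr_Pairs by blast
  then show ?thesis unfolding pr_def Pairs_def by auto
qed

lemma nth_xx: "t < NN \<Longrightarrow> sg t ! qq t = xx t" by (simp add: xx_def)
lemma nth_yy: "t < NN \<Longrightarrow> sg t ! Suc (qq t) = yy t" by (simp add: yy_def)

lemma C1: assumes t: "t < NN" and b: "xx t < b" "b < yy t"
  shows "(xx t, b) \<in> Inv (sg t)"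
proof -
  let ?s = "sg t" and ?q = "qq t"
  have tN: "t \<le> NN" using t by simp
  have "b \<in> set ?s" using sg_set[OF tN] pr_range[OF t] b by auto
  then obtain r where r: "r < n" "?s ! r = b" using sg_len[OF tN] by (auto simp: in_set_conv_nth)
  have lq: "Suc ?q < n" using qq_lt[OF t] .
  have "r \<noteq> ?q" using r b nth_xx[OF t] by auto
  moreover have "r \<noteq> Suc ?q" using r b nth_yy[OF t] by auto
  moreover have "\<not> Suc ?q < r"
  proof
    assume "Suc ?q < r"
    then have "contains132 ?s" unfolding contains132_def
      using r b nth_xx[OF t] nth_yy[OF t] sg_len[OF tN]
      by (intro exI[of _ ?q] exI[of _ "Suc ?q"] exI[of _ r]) auto
    then show False using avoid[OF tN] by simp
  qed
  ultimately have "r < ?q" by simp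
  then have "bef ?s b (xx t)" unfolding bef_def using r nth_xx[OF t] lq sg_len[OF tN]
    by (intro exI[of _ r] exI[of _ "qq t"]) auto
  then show ?thesis unfolding Inv_def using b by simp
qed

lemma C2: assumes t: "t < NN" and a: "1 \<le> a" "a < xx t"
  shows "(a, yy t) \<in> Inv (sg t)"
proof -
  let ?s = "sg t" and ?q = "qq t"
  have tN: "t \<le> NN" using t by simp
  have "a \<in> set ?s" using sg_set[OF tN] pr_range[OF t] a by auto
  then obtain r where r: "r < n" "?s ! r = a" using sg_len[OF tN] by (auto simp: in_set_conv_nth)
  have lq: "Suc ?q < n" using qq_lt[OF t] .
  have "r \<noteq> ?q" using r a nth_xx[OF t] by auto
  moreover have "r \<noteq> Suc ?q" using r a nth_yy[OF t] pr_range[OF t] by auto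
  moreover have "\<not> r < ?q"
  proof
    assume rq: "r < ?q"
    let ?s' = "sg (Suc t)"
    have e: "?s' ! r = a" "?s' ! ?q = yy t" "?s' ! Suc ?q = xx t"
      unfolding sg_Suc[OF t] using rq r lq sg_len[OF tN] nth_xx[OF t] nth_yy[OF t]
      by (auto simp: nth_list_update)
    have "length ?s' = n" using sg_len[of "Suc t"] t by simp
    then have "contains132 ?s'" unfolding contains132_def
      using e rq lq a pr_range[OF t]
      by (intro exI[of _ r] exI[of _ "?q"] exI[of _ "Suc ?q"]) auto
    then show False using avoid[of "Suc t"] t by simp
  qed
  ultimately have "Suc ?q < r" by simp
  then have "bef ?s (yy t) a" unfolding bef_def using r nth_yy[OF t] sg_len[OF tN]
    by (intro exI[of _ "Suc (qq t)"] exI[of _ r]) auto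
  then show ?thesis unfolding Inv_def using a pr_range[OF t] by simp
qed

lemma in_Inv: "t \<le> NN \<Longrightarrow> p \<in> Inv (sg t) \<Longrightarrow> \<exists>t'<t. pr t' = p"
  using Inv_img by auto

end


context net begin

lemma letter_pr: assumes t: "t < NN" shows "w!t = yy t - xx t"
proof -
  let ?s = "sg t" and ?q = "qq t" and ?x = "xx t" and ?y = "yy t"
  have tN: "t \<le> NN" using t by simp
  have len: "length ?s = n" using sg_len[OF tN] .
  have dist: "distinct ?s" using sg_dist[OF tN] .
  have lq: "Suc ?q < n" using qq_lt[OF t] .
  have xs: "?s ! ?q = ?x" using nth_xx[OF t] .
  have ltake: "length (take ?q ?s) = ?q" using len lq by simp
  have key: "set (take ?q ?s) = {?x<..<?y}"
  proof (rule set_eqI, rule iffI)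
    fix c assume "c \<in> set (take ?q ?s)"
    then obtain i where i: "i < ?q" "?s!i = c" using ltake by (auto simp: in_set_conv_nth)
    have bcx: "bef ?s c ?x" unfolding bef_def using i lq len xs
      by (intro exI[of _ i] exI[of _ ?q]) auto
    have cx: "c \<noteq> ?x"
    proof
      assume "c = ?x"
      then have "?s ! i = ?s ! ?q" using i xs by simp
      then have "i = ?q" using dist i lq len nth_eq_iff_index_eq by (metis Suc_lessD order.strict_trans)
      then show False using i by simp
    qed
    have cset: "c \<in> set ?s" using bcx bef_set by blast
    then have c1: "1 \<le> c" using sg_set[OF tN] by auto
    show "c \<in> {?x<..<?y}"
    proof (cases "c < ?x")
      case True
      have "(c, ?y) \<in> Inv ?s" by (rule C2[OF t c1 True])
      then obtain t' where t': "t' < t" "pr t' = (c, ?y)" using in_Inv[OF tN] by blast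
      have t'N: "t' < NN" using t' t by simp
      have e: "xx t' = c" "yy t' = ?y" using t'(2) unfolding pr_def by auto
      have "(c, ?x) \<in> Inv (sg t')" using C1[OF t'N, of ?x] e True pr_range[OF t] by simp
      then have "(c, ?x) \<in> Inv ?s" using Inv_mono[of t' t] t' tN by auto
      then have "bef ?s ?x c" unfolding Inv_def by simp
      then show ?thesis using bef_asym[OF dist bcx] by simp
    next
      case False
      then have xc: "?x < c" using cx by simp
      have inv: "(?x, c) \<in> Inv ?s" unfolding Inv_def using xc bcx by simp
      have "\<not> ?y \<le> c"
      proof
        assume yc: "?y \<le> c"
        show False
        proof (cases "c = ?y")
          case True then show False using inv Inv_step[OF t] unfolding pr_def by simp
        next
          case False
          then have yc': "?y < c" using yc by simp
          obtain t' where t': "t' < t" "pr t' = (?x, c)" using in_Inv[OF tN inv] by blast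
          have t'N: "t' < NN" using t' t by simp
          have e: "xx t' = ?x" "yy t' = c" using t'(2) unfolding pr_def by auto
          have "(?x, ?y) \<in> Inv (sg t')" using C1[OF t'N, of ?y] e yc' pr_range[OF t] by simp
          then have "(?x, ?y) \<in> Inv ?s" using Inv_mono[of t' t] t' tN by auto
          then show False using Inv_step[OF t] unfolding pr_def by simp
        qed
      qed
      then show ?thesis using xc by simp
    qed
  next
    fix c assume "c \<in> {?x<..<?y}"
    then have "(?x, c) \<in> Inv ?s" using C1[OF t] by simp
    then have "bef ?s c ?x" unfolding Inv_def by simp
    then obtain i j where ij: "i<j" "j<length ?s" "?s!i = c" "?s!j = ?x" unfolding bef_def by blast
    then have "j = ?q" using dist xs lq len nth_eq_iff_index_eq by (metis Suc_lessD)
    then have "i < ?q" "take ?q ?s ! i = c" using ij by auto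
    then show "c \<in> set (take ?q ?s)" using ltake by (metis in_set_conv_nth)
  qed
  have "card (set (take ?q ?s)) = ?q"
    using distinct_card[of "take ?q ?s"] distinct_take[OF dist] ltake by simp
  then have "?q = ?y - Suc ?x" using key by simp
  then show ?thesis using Suc_qq[OF t] pr_range[OF t] by arith
qed

definition tau :: "nat \<times> nat \<Rightarrow> nat" where "tau p = the_inv_into {..<NN} pr p"

lemma tau: "p \<in> Pairs n \<Longrightarrow> tau p < NN \<and> pr (tau p) = p"
  unfolding tau_def using the_inv_into_into[OF pr_inj, of p "{..<NN}"]
    f_the_inv_into_f[OF pr_inj, of p] pr_Pairs by auto

lemma tau_pr: "t < NN \<Longrightarrow> tau (pr t) = t"
  unfolding tau_def using the_inv_into_f_f[OF pr_inj] by simp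

lemma pair_in: "1 \<le> a \<Longrightarrow> a < b \<Longrightarrow> b \<le> n \<Longrightarrow> (a,b) \<in> Pairs n"
  unfolding Pairs_def by simp

lemma tau_xy: "1 \<le> a \<Longrightarrow> a < b \<Longrightarrow> b \<le> n \<Longrightarrow> xx (tau (a,b)) = a \<and> yy (tau (a,b)) = b \<and> tau (a,b) < NN"
  using tau[OF pair_in] unfolding pr_def by auto

lemma letter_tau: "1 \<le> a \<Longrightarrow> a < b \<Longrightarrow> b \<le> n \<Longrightarrow> w ! tau (a,b) = b - a"
  using tau_xy letter_pr by auto

lemma tau_before: assumes "1 \<le> a" "a < b" "b \<le> n" "t \<le> NN" "(a,b) \<in> Inv (sg t)"
  shows "tau (a,b) < t"
proof -
  obtain t' where "t' < t" "pr t' = (a,b)" using in_Inv assms by blast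
  then show ?thesis using tau_pr[of t'] assms(4) by auto
qed

lemma T1: assumes "1 \<le> a" "a < b" "b < c" "c \<le> n" shows "tau (a,b) < tau (a,c)"
proof -
  have e: "xx (tau (a,c)) = a" "yy (tau (a,c)) = c" "tau (a,c) < NN" using tau_xy[of a c] assms by auto
  have "(a,b) \<in> Inv (sg (tau (a,c)))" using C1[OF e(3), of b] e assms by simp
  then show ?thesis using tau_before assms e by simp
qed

lemma T2: assumes "1 \<le> a" "a < a'" "a' < b" "b \<le> n" shows "tau (a,b) < tau (a',b)"
proof -
  have e: "xx (tau (a',b)) = a'" "yy (tau (a',b)) = b" "tau (a',b) < NN" using tau_xy[of a' b] assms by auto
  have "(a,b) \<in> Inv (sg (tau (a',b)))" using C2[OF e(3), of a] e assms by simp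
  then show ?thesis using tau_before assms e by simp
qed

lemma g_step: "1 \<le> c \<Longrightarrow> 1 \<le> a \<Longrightarrow> Suc a + c \<le> n \<Longrightarrow> tau (a,a+c) < tau (Suc a, Suc a + c)"
  using T1[of a "a+c" "Suc (a+c)"] T2[of a "Suc a" "Suc a + c"] by simp

lemma g_mono: "1 \<le> c \<Longrightarrow> 1 \<le> a \<Longrightarrow> a < b \<Longrightarrow> b + c \<le> n \<Longrightarrow> tau (a,a+c) < tau (b,b+c)"
proof (induction b)
  case 0 then show ?case by simp
next
  case (Suc b)
  show ?case
  proof (cases "a = b")
    case True then show ?thesis using g_step Suc.prems by simp
  next
    case False
    then have "tau (a,a+c) < tau (b,b+c)" using Suc by simp
    also have "\<dots> < tau (Suc b, Suc b + c)" using g_step[of c b] Suc.prems False by simp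
    finally show ?thesis .
  qed
qed

lemma occ: assumes c: "1 \<le> c"
  shows "{m. 1 \<le> m \<and> m \<le> NN \<and> letter w m = c} = set (map (\<lambda>a. Suc (tau (a,a+c))) [1..<n-c+1])"
proof (rule set_eqI, rule iffI)
  fix m assume "m \<in> {m. 1 \<le> m \<and> m \<le> NN \<and> letter w m = c}"
  then have m: "1 \<le> m" "m \<le> NN" "w ! (m-1) = c" unfolding letter_def by auto
  define t where "t = m - 1"
  have t: "t < NN" using m t_def by simp
  have r: "1 \<le> xx t" "xx t < yy t" "yy t \<le> n" using pr_range[OF t] by auto
  have "yy t = xx t + c" using letter_pr[OF t] m(3) r t_def by (simp; arith)
  moreover have "tau (pr t) = t" using tau_pr[OF t] .
  ultimately have "m = Suc (tau (xx t, xx t + c))" using m t_def unfolding pr_def by simp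
  moreover have "xx t \<in> set [1..<n-c+1]" using r \<open>yy t = xx t + c\<close> by auto
  ultimately show "m \<in> set (map (\<lambda>a. Suc (tau (a,a+c))) [1..<n-c+1])" by auto
next
  fix m assume "m \<in> set (map (\<lambda>a. Suc (tau (a,a+c))) [1..<n-c+1])"
  then obtain a where a: "1 \<le> a" "a + c \<le> n" "m = Suc (tau (a,a+c))" by auto
  have "tau (a,a+c) < NN" "w ! tau (a,a+c) = c" using tau_xy[of a "a+c"] letter_tau[of a "a+c"] a c by auto
  then show "m \<in> {m. 1 \<le> m \<and> m \<le> NN \<and> letter w m = c}" using a unfolding letter_def by simp
qed

lemma Qtab_eq: assumes c: "1 \<le> c" and i: "1 \<le> i" "i + c \<le> n"
  shows "Qtab w (i,c) = Suc (tau (i,i+c))"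
proof -
  define L where "L = map (\<lambda>a. Suc (tau (a,a+c))) [1..<n-c+1]"
  have lenL: "length L = n - c" unfolding L_def by (simp; arith)
  have "sorted_wrt (<) L" unfolding sorted_wrt_iff_nth_less
  proof (intro allI impI)
    fix p r assume pr: "p < r" "r < length L"
    then have "L ! p = Suc (tau (Suc p, Suc p + c))" "L ! r = Suc (tau (Suc r, Suc r + c))"
      unfolding L_def using lenL by (auto simp: nth_upt L_def simp del: upt_Suc)
    moreover have "tau (Suc p, Suc p + c) < tau (Suc r, Suc r + c)"
      using g_mono[of c "Suc p" "Suc r"] c pr lenL by simp
    ultimately show "L ! p < L ! r" by simp
  qed
  then have sd: "sorted L" "distinct L" using strict_sorted_iff by auto
  have "sorted_list_of_set (set L) = L"
    using sd by (simp add: sorted_list_of_set_sort_remdups distinct_remdups_id sorted_sort_id)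
  moreover have "{m. 1 \<le> m \<and> m \<le> length w \<and> letter w m = c} = set L" using occ[OF c] unfolding L_def .
  ultimately have "Qtab w (i,c) = L ! (i - 1)" unfolding Qtab_def by simp
  also have "\<dots> = Suc (tau (i, i+c))"
  proof -
    have il: "i - 1 < length [1..<n-c+1]" using i by (simp del: upt_Suc)
    have "[1..<n-c+1] ! (i-1) = 1 + (i - 1)" using i by (subst nth_upt) auto
    then have "[1..<n-c+1] ! (i-1) = i" using i by simp
    then show ?thesis unfolding L_def using il by (simp del: upt_Suc)
  qed
  finally show ?thesis .
qed

lemma Qshift_eq: assumes "(i,j) \<in> shifted_staircase n"
  shows "Qshift w (i,j) = Suc (tau (i, Suc j))"
proof -
  have h: "1 \<le> i" "i \<le> j" "j \<le> n - 1" using assms unfolding shifted_staircase_def by auto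
  have "Qshift w (i,j) = Qtab w (i, j + 1 - i)" unfolding Qshift_def by simp
  also have "\<dots> = Suc (tau (i, i + (j + 1 - i)))" using Qtab_eq[of "j+1-i" i] h by simp
  finally show ?thesis using h by simp
qed

end

context net begin

lemma main:
  assumes k1: "1 \<le> k" and k2: "k \<le> NN - 1"
  defines "u \<equiv> THE c. c \<in> shifted_staircase n \<and> Qshift w c = k"
  shows "((\<exists>j. letter w k = j \<and> letter w (k + 1) = j + 1)
            \<longleftrightarrow> horiz_adj (Qshift w) (shifted_staircase n) u)
       \<and> ((\<exists>j. letter w k = j + 1 \<and> letter w (k + 1) = j)
            \<longleftrightarrow> vert_adj (Qshift w) (shifted_staircase n) u)"
proof -
  define t0 where "t0 = k - 1"
  have t0: "t0 < NN" and t1: "k < NN" and kt: "k = Suc t0" using k1 k2 t0_def by auto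
  define a where "a = xx t0"
  define b where "b = yy t0"
  have ab: "1 \<le> a" "a < b" "b \<le> n" using pr_range[OF t0] a_def b_def by auto
  have tau0: "tau (a,b) = t0" using tau_pr[OF t0] unfolding pr_def a_def b_def .
  have D0: "(a, b - 1) \<in> shifted_staircase n" using ab unfolding shifted_staircase_def by auto
  have Q0: "Qshift w (a, b-1) = k" using Qshift_eq[OF D0] ab tau0 kt by simp
  have u: "u = (a, b - 1)" unfolding u_def
  proof (rule the_equality)
    show "(a, b - 1) \<in> shifted_staircase n \<and> Qshift w (a, b - 1) = k" using D0 Q0 by simp
  next
    fix c assume c: "c \<in> shifted_staircase n \<and> Qshift w c = k"
    obtain i j where cij: "c = (i,j)" by (cases c)
    have D: "1 \<le> i" "i \<le> j" "j \<le> n - 1" using c cij unfolding shifted_staircase_def by auto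
    have "Suc (tau (i, Suc j)) = k" using Qshift_eq[of i j] c cij by simp
    then have "tau (i, Suc j) = t0" using kt by simp
    then have "pr t0 = (i, Suc j)" using tau[OF pair_in[of i "Suc j"]] D by auto
    then show "c = (a, b - 1)" using cij a_def b_def unfolding pr_def by auto
  qed
  have l0: "letter w k = b - a" using letter_pr[OF t0] kt a_def b_def unfolding letter_def by simp
  define a' where "a' = xx k"
  define b' where "b' = yy k"
  have ab': "1 \<le> a'" "a' < b'" "b' \<le> n" using pr_range[OF t1] a'_def b'_def by auto
  have l1: "letter w (k+1) = b' - a'" using letter_pr[OF t1] a'_def b'_def unfolding letter_def by simp
  have tau1: "tau (a',b') = k" using tau_pr[OF t1] unfolding pr_def a'_def b'_def .
  have lq0: "Suc (qq t0) < n" using qq_lt[OF t0] .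
  have len0: "length (sg t0) = n" using sg_len t0 by simp
  have pos: "sg k ! qq t0 = b" "sg k ! Suc (qq t0) = a"
    unfolding kt sg_Suc[OF t0] using lq0 len0 by (auto simp: nth_list_update a_def b_def xx_def yy_def)
  have w0: "w ! t0 = b - a" using letter_pr[OF t0] a_def b_def by simp
  have w1: "w ! k = b' - a'" using letter_pr[OF t1] a'_def b'_def by simp
  have q0: "qq t0 = b - a - 1" using w0 unfolding qq_def by simp
  have q1: "qq k = b' - a' - 1" using w1 unfolding qq_def by simp
  have xa: "a' = sg k ! qq k" "b' = sg k ! Suc (qq k)" unfolding a'_def b'_def xx_def yy_def by auto
  have H: "(\<exists>j. letter w k = j \<and> letter w (k + 1) = j + 1) \<longleftrightarrow> horiz_adj (Qshift w) (shifted_staircase n) u"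
  proof
    assume "\<exists>j. letter w k = j \<and> letter w (k + 1) = j + 1"
    then have e: "b' - a' = b - a + 1" using l0 l1 by simp
    then have "qq k = Suc (qq t0)" using q0 q1 ab by simp
    then have "a' = a" using xa pos by simp
    then have "b' = b + 1" using e ab ab' by simp
    then have Dn: "(a, b) \<in> shifted_staircase n" using ab ab' unfolding shifted_staircase_def by simp
    have "Qshift w (a, b) = Suc k" using Qshift_eq[OF Dn] tau1 \<open>a' = a\<close> \<open>b' = b + 1\<close> by simp
    moreover have hb: "b - 1 + 1 = b" using ab by simp
    ultimately show "horiz_adj (Qshift w) (shifted_staircase n) u"
      unfolding horiz_adj_def u fst_conv snd_conv hb Q0 using Dn by simp
  next
    assume hh: "horiz_adj (Qshift w) (shifted_staircase n) u"
    have hb: "b - 1 + 1 = b" using ab by simp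
    from hh have Dn: "(a, b) \<in> shifted_staircase n" and "Qshift w (a, b) = Suc k"
      unfolding horiz_adj_def u fst_conv snd_conv hb Q0 by auto
    then have "tau (a, Suc b) = k" using Qshift_eq[OF Dn] by simp
    then have "pr k = (a, Suc b)" using tau[OF pair_in[of a "Suc b"]] Dn ab unfolding shifted_staircase_def by auto
    then have "a' = a" "b' = Suc b" unfolding pr_def a'_def b'_def by auto
    then show "\<exists>j. letter w k = j \<and> letter w (k + 1) = j + 1" using l0 l1 ab by simp
  qed
  have V: "(\<exists>j. letter w k = j + 1 \<and> letter w (k + 1) = j) \<longleftrightarrow> vert_adj (Qshift w) (shifted_staircase n) u"
  proof
    assume "\<exists>j. letter w k = j + 1 \<and> letter w (k + 1) = j"
    then have e: "b - a = b' - a' + 1" using l0 l1 by simp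
    then have "qq t0 = Suc (qq k)" using q0 q1 ab ab' by simp
    then have "b' = b" using xa pos by simp
    then have "a' = a + 1" using e ab ab' by simp
    then have Dn: "(a + 1, b - 1) \<in> shifted_staircase n"
      using ab ab' \<open>b' = b\<close> unfolding shifted_staircase_def by (simp; arith)
    have "Qshift w (a + 1, b - 1) = Suc k" using Qshift_eq[OF Dn] tau1 \<open>a' = a + 1\<close> \<open>b' = b\<close> ab by simp
    then show "vert_adj (Qshift w) (shifted_staircase n) u"
      unfolding vert_adj_def u fst_conv snd_conv Q0 using Dn by simp
  next
    assume "vert_adj (Qshift w) (shifted_staircase n) u"
    then have Dn: "(a + 1, b - 1) \<in> shifted_staircase n" and "Qshift w (a + 1, b - 1) = Suc k"
      unfolding vert_adj_def u fst_conv snd_conv Q0 by auto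
    then have "tau (a + 1, b) = k" using Qshift_eq[OF Dn] ab by simp
    moreover have "a + 1 < b" using Dn ab unfolding shifted_staircase_def by auto
    ultimately have "pr k = (a + 1, b)" using tau[OF pair_in[of "a+1" b]] ab by auto
    then have "a' = a + 1" "b' = b" unfolding pr_def a'_def b'_def by auto
    then show "\<exists>j. letter w k = j + 1 \<and> letter w (k + 1) = j" using l0 l1 ab \<open>a + 1 < b\<close> by simp
  qed
  show ?thesis using H V by blast
qed

end

theorem mainTheorem10:
  fixes n k :: nat and w :: "nat list"
  assumes "avoiding132 n w"
    and "1 \<le> k" and "k \<le> (n choose 2) - 1"
  defines "u \<equiv> THE c. c \<in> shifted_staircase n \<and> Qshift w c = k"
  shows "((\<exists>j. letter w k = j \<and> letter w (k + 1) = j + 1)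
            \<longleftrightarrow> horiz_adj (Qshift w) (shifted_staircase n) u)
       \<and> ((\<exists>j. letter w k = j + 1 \<and> letter w (k + 1) = j)
            \<longleftrightarrow> vert_adj (Qshift w) (shifted_staircase n) u)"
proof -
  interpret net n w by unfold_locales (rule assms(1))
  show ?thesis unfolding u_def using main[OF assms(2)] assms(3) N_eq by simp
qed


end
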